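(* As formal power series in $q$, coefficientwise, $$\sum_{n=1}^{\infty} \overline{p}_{\omega}(n)q^n \equiv -1 +\sum_{m,n=0}^{\infty} (-1)^{m+n} q^{2(m^2+n^2)} + q \sum_{m,n=0}^{\infty} q^{2m(m+1)+2n(n+1)} \pmod{4}.$$
   Context: An overpartition of $n$ is a partition of $n$ in which the first occurrence of each distinct part may be overlined. $\overline{p}_{\omega}(n)$ denotes the number of overpartitions of $n$ in which the smallest part is overlined and all odd parts are less than twice the smallest part; equivalently $\sum_{n\ge1}\overline{p}_{\omega}(n)q^n=\sum_{n\ge1}\frac{q^n(-q^{n+1};q)_n(-q^{2n+2};q^2)_{\infty}}{(1-q^n)(q^{n+1};q)_n(q^{2n+2};q^2)_{\infty}}$, where $(a;q)_n=\prod_{j=0}^{n-1}(1-aq^j)$, $(a;q)_\infty=\prod_{j\ge0}(1-aq^j)$. *)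

theory Defs
  imports Main "HOL-Library.Multiset"
begin

text \<open>An overpartition of n is encoded as a pair (M, Ov): M is the multiset of parts
  (positive naturals summing to n) and Ov is the set of distinct part sizes whose
  first occurrence is overlined (so Ov is a subset of the set of parts).\<close>

definition overpartitions :: "nat \<Rightarrow> (nat multiset \<times> nat set) set" where
  "overpartitions n = {(M, Ov). (\<forall>k \<in># M. 0 < k) \<and> sum_mset M = n \<and> Ov \<subseteq> set_mset M}"

definition pbar_omega :: "nat \<Rightarrow> nat" where
  "pbar_omega n = card {(M, Ov) \<in> overpartitions n.
       M \<noteq> {#} \<and> Min (set_mset M) \<in> Ov \<and>
       (\<forall>k \<in># M. odd k \<longrightarrow> k < 2 * Min (set_mset M))}"

text \<open>Coefficient of q^N in
  -1 + sum_{m,n>=0} (-1)^(m+n) q^(2(m^2+n^2)) + q sum_{m,n>=0} q^(2m(m+1)+2n(n+1)).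
  Only m, n \<le> N can contribute.\<close>

definition rhs_coeff :: "nat \<Rightarrow> int" where
  "rhs_coeff N =
     (if N = 0 then -1 else 0)
     + (\<Sum>(m, n) \<in> {(m, n). m \<le> N \<and> n \<le> N \<and> 2 * (m^2 + n^2) = N}. (-1::int) ^ (m + n))
     + int (card {(m, n). m \<le> N \<and> n \<le> N \<and> 1 + 2 * m * (m + 1) + 2 * n * (n + 1) = N})"

end

theory Submission
  imports Defs
begin

lemma invol_mod2:
  assumes "finite S" "\<forall>x\<in>S. f x \<in> S" "\<forall>x\<in>S. f (f x) = x"
  shows "card S mod 2 = card {x\<in>S. f x = x} mod 2"
  using assms
proof (induction "card S" arbitrary: S rule: less_induct)
  case less
  show ?case
  proof (cases "\<exists>x\<in>S. f x \<noteq> x")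
    case False
    then have "{x\<in>S. f x = x} = S" by auto
    then show ?thesis by simp
  next
    case True
    then obtain x where x: "x \<in> S" "f x \<noteq> x" by auto
    define S' where "S' = S - {x, f x}"
    have fx: "f x \<in> S" using less.prems x by auto
    have fin': "finite S'" using less.prems S'_def by auto
    have sub: "{x, f x} \<subseteq> S" using x fx by auto
    have c: "card S = card S' + 2"
      using card_Diff_subset[OF _ sub] less.prems(1) x(2) sub card_mono[OF less.prems(1) sub] S'_def
      by (auto simp: card_insert_if)
    have cl1: "\<forall>y\<in>S'. f y \<in> S'"
    proof
      fix y assume y: "y \<in> S'"
      then have yS: "y \<in> S" "y \<noteq> x" "y \<noteq> f x" using S'_def by auto
      have "f y \<in> S" using less.prems yS by auto
      moreover have "f y \<noteq> x" using yS less.prems by (metis)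
      moreover have "f y \<noteq> f x" using yS less.prems x by metis
      ultimately show "f y \<in> S'" using S'_def by auto
    qed
    have cl2: "\<forall>y\<in>S'. f (f y) = y" using less.prems S'_def by auto
    have IH: "card S' mod 2 = card {y\<in>S'. f y = y} mod 2"
      using less.hyps[of S'] c fin' cl1 cl2 by auto
    have "{y\<in>S'. f y = y} = {y\<in>S. f y = y}"
      using S'_def x less.prems by auto
    with IH c show ?thesis by simp
  qed
qed


type_synonym q4 = "nat \<times> nat \<times> nat \<times> nat"

definition QP :: "nat \<Rightarrow> (nat \<Rightarrow> nat \<Rightarrow> nat \<Rightarrow> nat \<Rightarrow> bool) \<Rightarrow> q4 set" where
  "QP N P = {(p,q,r,s). 0<p \<and> 0<q \<and> 0<r \<and> 0<s \<and> p*r+q*s = N \<and> P p q r s}"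

lemma QP_mem[simp]: "(p,q,r,s) \<in> QP N P \<longleftrightarrow> 0<p \<and> 0<q \<and> 0<r \<and> 0<s \<and> p*r+q*s = N \<and> P p q r s"
  by (simp add: QP_def)

lemma QP_sub: "QP N P \<subseteq> {0..N} \<times> {0..N} \<times> {0..N} \<times> {0..N}"
proof
  fix x assume "x \<in> QP N P"
  then obtain p q r s where x: "x = (p,q,r,s)" "0<p" "0<q" "0<r" "0<s" "p*r+q*s = N"
    by (auto simp: QP_def)
  have "p*1 \<le> p*r" "1*r \<le> p*r" "q*1 \<le> q*s" "1*s \<le> q*s"
    using x by (intro mult_le_mono; simp)+
  then have "p \<le> N" "q \<le> N" "r \<le> N" "s \<le> N" using x(6) by linarith+
  then show "x \<in> {0..N} \<times> {0..N} \<times> {0..N} \<times> {0..N}" using x by auto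
qed

lemma finite_QP[simp]: "finite (QP N P)"
  by (rule finite_subset[OF QP_sub]) auto

lemma QP_cong: "(\<And>p q r s. 0<p \<Longrightarrow> 0<q \<Longrightarrow> 0<r \<Longrightarrow> 0<s \<Longrightarrow> p*r+q*s = N \<Longrightarrow> P p q r s = P' p q r s)
   \<Longrightarrow> QP N P = QP N P'"
  unfolding QP_def by auto

lemma QP_split: "card (QP N P) = card (QP N (\<lambda>p q r s. P p q r s \<and> R p q r s)) + card (QP N (\<lambda>p q r s. P p q r s \<and> \<not> R p q r s))"
proof -
  have "QP N P = QP N (\<lambda>p q r s. P p q r s \<and> R p q r s) \<union> QP N (\<lambda>p q r s. P p q r s \<and> \<not> R p q r s)"
    by (auto simp: QP_def)
  moreover have "QP N (\<lambda>p q r s. P p q r s \<and> R p q r s) \<inter> QP N (\<lambda>p q r s. P p q r s \<and> \<not> R p q r s) = {}"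
    by (auto simp: QP_def)
  ultimately show ?thesis by (simp add: card_Un_disjoint)
qed

definition psi :: "q4 \<Rightarrow> q4" where "psi = (\<lambda>(p,q,r,s). (s, r+s, q-p, p))"
definition tau1 :: "q4 \<Rightarrow> q4" where "tau1 = (\<lambda>(p,q,r,s). (r,s,p,q))"
definition tau2 :: "q4 \<Rightarrow> q4" where "tau2 = (\<lambda>(p,q,r,s). (s,r,q,p))"

lemma psi_simp[simp]: "psi (p,q,r,s) = (s, r+s, q-p, p)" by (simp add: psi_def)
lemma tau1_simp[simp]: "tau1 (p,q,r,s) = (r,s,p,q)" by (simp add: tau1_def)
lemma tau2_simp[simp]: "tau2 (p,q,r,s) = (s,r,q,p)" by (simp add: tau2_def)

lemma invol_QP:
  assumes "\<And>p q r s. (p,q,r,s) \<in> QP N P \<Longrightarrow> f (p,q,r,s) \<in> QP N P"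
      and "\<And>p q r s. (p,q,r,s) \<in> QP N P \<Longrightarrow> f (f (p,q,r,s)) = (p,q,r,s)"
  shows "card (QP N P) mod 2 = card {x\<in>QP N P. f x = x} mod 2"
  apply (rule invol_mod2)
  using assms by auto

lemma psi_C:
  "card (QP N (\<lambda>p q r s. p<q \<and> even (p+q+r))) mod 2 =
   card (QP N (\<lambda>p q r s. p<q \<and> s = p \<and> q = r + p)) mod 2"
proof -
  let ?P = "\<lambda>p q r s. p<q \<and> even (p+q+r)"
  have 1: "card (QP N ?P) mod 2 = card {x\<in>QP N ?P. psi x = x} mod 2"
  proof (rule invol_QP)
    fix p q r s assume a: "(p,q,r,s) \<in> QP N ?P"
    then have h: "0<p" "0<q" "0<r" "0<s" "p*r+q*s = N" "p<q" "even (p+q+r)" by simp_all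
    obtain k where k: "q = p + k" "0<k" using h(6) less_imp_add_positive by blast
    have e1: "s*k + (r+s)*p = N" using h(5) k(1) by (simp add: algebra_simps)
    have e2: "even (s + (r+s) + k)" using h(7) k(1) by presburger
    have "(s, r+s, k, p) \<in> QP N ?P" using e1 e2 h k by simp
    then show "psi (p,q,r,s) \<in> QP N ?P" using k by simp
  next
    fix p q r s assume a: "(p,q,r,s) \<in> QP N ?P"
    then have "p<q" by simp
    then show "psi (psi (p,q,r,s)) = (p,q,r,s)" by simp
  qed
  have E: "{x\<in>QP N ?P. psi x = x} = QP N (\<lambda>p q r s. p<q \<and> s = p \<and> q = r + p)"
  proof (rule set_eqI)
    fix x :: q4
    obtain p q r s where x: "x = (p,q,r,s)" using prod_cases4 by blast
    show "x \<in> {x\<in>QP N ?P. psi x = x} \<longleftrightarrow> x \<in> QP N (\<lambda>p q r s. p<q \<and> s = p \<and> q = r + p)"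
      unfolding x by auto
  qed
  show ?thesis using 1 unfolding E by simp
qed

lemma tau1_O:
  "card (QP N (\<lambda>p q r s. p<q \<and> r<s \<and> odd (p+q+r+s))) mod 2 = 0"
proof -
  let ?P = "\<lambda>p q r s. p<q \<and> r<s \<and> odd (p+q+r+s)"
  have 1: "card (QP N ?P) mod 2 = card {x\<in>QP N ?P. tau1 x = x} mod 2"
  proof (rule invol_QP)
    fix p q r s assume a: "(p,q,r,s) \<in> QP N ?P"
    then have h: "0<p" "0<q" "0<r" "0<s" "p*r+q*s = N" "p<q" "r<s" "odd (p+q+r+s)" by simp_all
    have "r*p + s*q = N" using h(5) by (simp add: mult.commute)
    moreover have "odd (r+s+p+q)" using h(8) by (simp add: ac_simps)
    ultimately show "tau1 (p,q,r,s) \<in> QP N ?P" using h by simp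
  qed simp
  have E: "{x\<in>QP N ?P. tau1 x = x} = {}"
  proof (rule set_eqI)
    fix x :: q4
    obtain p q r s where x: "x = (p,q,r,s)" using prod_cases4 by blast
    show "x \<in> {x\<in>QP N ?P. tau1 x = x} \<longleftrightarrow> x \<in> {}"
      unfolding x by auto
  qed
  show ?thesis using 1 unfolding E by simp
qed

lemma tau2_O:
  "card (QP N (\<lambda>p q r s. p<q \<and> s<r \<and> odd (p+q+r+s))) mod 2 = 0"
proof -
  let ?P = "\<lambda>p q r s. p<q \<and> s<r \<and> odd (p+q+r+s)"
  have 1: "card (QP N ?P) mod 2 = card {x\<in>QP N ?P. tau2 x = x} mod 2"
  proof (rule invol_QP)
    fix p q r s assume a: "(p,q,r,s) \<in> QP N ?P"
    then have h: "0<p" "0<q" "0<r" "0<s" "p*r+q*s = N" "p<q" "s<r" "odd (p+q+r+s)" by simp_all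
    have "s*q + r*p = N" using h(5) by (simp add: mult.commute add.commute)
    moreover have "odd (s+r+q+p)" using h(8) by (simp add: ac_simps)
    ultimately show "tau2 (p,q,r,s) \<in> QP N ?P" using h by simp
  qed simp
  have E: "{x\<in>QP N ?P. tau2 x = x} = {}"
  proof (rule set_eqI)
    fix x :: q4
    obtain p q r s where x: "x = (p,q,r,s)" using prod_cases4 by blast
    show "x \<in> {x\<in>QP N ?P. tau2 x = x} \<longleftrightarrow> x \<in> {}"
      unfolding x by auto
  qed
  show ?thesis using 1 unfolding E by simp
qed

lemma tau1_W:
  "card (QP N (\<lambda>p q r s. p<q \<and> r<s)) mod 2 = card (QP N (\<lambda>p q r s. p<q \<and> r = p \<and> s = q)) mod 2"
proof -
  let ?P = "\<lambda>p q r s. p<q \<and> r<s"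
  have 1: "card (QP N ?P) mod 2 = card {x\<in>QP N ?P. tau1 x = x} mod 2"
  proof (rule invol_QP)
    fix p q r s assume "(p,q,r,s) \<in> QP N ?P"
    then show "tau1 (p,q,r,s) \<in> QP N ?P" by (simp add: mult.commute)
  qed simp
  have E: "{x\<in>QP N ?P. tau1 x = x} = QP N (\<lambda>p q r s. p<q \<and> r = p \<and> s = q)"
  proof (rule set_eqI)
    fix x :: q4
    obtain p q r s where x: "x = (p,q,r,s)" using prod_cases4 by blast
    show "x \<in> {x\<in>QP N ?P. tau1 x = x} \<longleftrightarrow> x \<in> QP N (\<lambda>p q r s. p<q \<and> r = p \<and> s = q)"
      unfolding x by auto
  qed
  show ?thesis using 1 unfolding E by simp
qed


definition Dv :: "nat \<Rightarrow> nat \<Rightarrow> (nat\<times>nat) set" where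
  "Dv c N = {(d,e). c*d*e = N}"

lemma Dv_mem[simp]: "(d,e) \<in> Dv c N \<longleftrightarrow> c*d*e = N" by (simp add: Dv_def)

lemma finite_Dv: assumes "0<N" shows "finite (Dv c N)"
proof -
  have "Dv c N \<subseteq> {0..N} \<times> {0..N}"
  proof
    fix x assume "x \<in> Dv c N"
    then obtain d e where x: "x = (d,e)" "c*d*e = N" by (auto simp: Dv_def)
    then have "c \<noteq> 0" "d \<noteq> 0" "e \<noteq> 0" using assms by auto
    then have "1*d*1 \<le> c*d*e" "1*1*e \<le> c*d*e" by (intro mult_le_mono; simp)+
    then show "x \<in> {0..N} \<times> {0..N}" using x by auto
  qed
  then show ?thesis by (rule finite_subset) auto
qed

definition sqc :: "nat \<Rightarrow> nat \<Rightarrow> nat" where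
  "sqc c N = (if \<exists>t. c*t*t = N then 1 else 0)"

lemma sq_unique: fixes c t u :: nat assumes "0<c" "c*t*t = c*u*u" shows "t = u"
proof (rule ccontr)
  assume "t \<noteq> u"
  then have "t<u \<or> u<t" by arith
  then show False
  proof
    assume "t<u" then have "t*t < u*u" by (simp add: mult_strict_mono)
    then have "c*(t*t) < c*(u*u)" using assms by simp
    then show False using assms by (simp add: mult.assoc)
  next
    assume "u<t" then have "u*u < t*t" by (simp add: mult_strict_mono)
    then have "c*(u*u) < c*(t*t)" using assms by simp
    then show False using assms by (simp add: mult.assoc)
  qed
qed

lemma card_diag: fixes c N :: nat assumes "0<c" shows "card {(d,e). d = e \<and> c*d*e = N} = sqc c N"
proof (cases "\<exists>t. c*t*t = N")
  case True
  then obtain t where t: "c*t*t = N" by blast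
  have "{(d,e). d = e \<and> c*d*e = N} = {(t,t)}"
  proof (rule set_eqI)
    fix x :: "nat\<times>nat"
    obtain d e where x: "x = (d,e)" by (cases x)
    have "d = e \<and> c*d*e = N \<longleftrightarrow> d = t \<and> e = t"
    proof
      assume a: "d = e \<and> c*d*e = N"
      then have "e = d" "c*d*e = N" by auto
      then have "c*d*d = c*t*t" using t by simp
      then have "d = t" using sq_unique[OF assms] by blast
      then show "d = t \<and> e = t" using a by simp
    next
      assume "d = t \<and> e = t" then show "d = e \<and> c*d*e = N" using t by simp
    qed
    then show "x \<in> {(d,e). d = e \<and> c*d*e = N} \<longleftrightarrow> x \<in> {(t,t)}" using x by simp
  qed
  then show ?thesis using True by (simp add: sqc_def)
next
  case False
  then have e: "{(d,e). d = e \<and> c*d*e = N} = {}" by auto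
  show ?thesis using False unfolding e sqc_def by simp
qed

lemma Dv_mod2: fixes c N :: nat assumes "0<N" "0<c"
  shows "card (Dv c N) mod 2 = sqc c N"
proof -
  let ?f = "\<lambda>(d::nat,e::nat). (e,d)"
  have 1: "card (Dv c N) mod 2 = card {x\<in>Dv c N. ?f x = x} mod 2"
    by (rule invol_mod2) (auto simp: finite_Dv assms ac_simps)
  have "{x\<in>Dv c N. ?f x = x} = {(d,e). d = e \<and> c*d*e = N}" by auto
  then have "card {x\<in>Dv c N. ?f x = x} = sqc c N" using card_diag[OF assms(2)] by simp
  moreover have "sqc c N < 2" by (simp add: sqc_def)
  ultimately show ?thesis using 1 by simp
qed

definition Dl :: "nat \<Rightarrow> (nat\<times>nat) set" where "Dl N = {(d,e). d<e \<and> d*e = N}"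

lemma card_Dv1: assumes "0<N" shows "card (Dv 1 N) = 2 * card (Dl N) + sqc 1 N"
proof -
  have fin: "finite (Dv 1 N)" using finite_Dv assms by blast
  let ?A = "Dl N" and ?B = "{(d,e). e<d \<and> d*e = N}" and ?C = "{(d,e). d=e \<and> d*e = N}"
  have U: "Dv 1 N = ?A \<union> ?B \<union> ?C" by (auto simp: Dl_def)
  have finA: "finite ?A" by (rule finite_subset[OF _ fin]) (auto simp: Dl_def)
  have finB: "finite ?B" by (rule finite_subset[OF _ fin]) auto
  have finC: "finite ?C" by (rule finite_subset[OF _ fin]) auto
  have "?B = (\<lambda>(d,e). (e,d)) ` ?A" by (auto simp: Dl_def image_iff mult.commute)
  moreover have "inj_on (\<lambda>(d::nat,e::nat). (e,d)) ?A" by (auto simp: inj_on_def)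
  ultimately have cB: "card ?B = card ?A" by (simp add: card_image)
  have cC: "card ?C = sqc 1 N" using card_diag[of 1 N] by simp
  have d1: "?A \<inter> ?B = {}" by (auto simp: Dl_def)
  have d2: "(?A \<union> ?B) \<inter> ?C = {}" by (auto simp: Dl_def)
  have "card (?A \<union> ?B) = card ?A + card ?B" using card_Un_disjoint[OF finA finB d1] .
  moreover have "card (?A \<union> ?B \<union> ?C) = card (?A \<union> ?B) + card ?C"
    using card_Un_disjoint[OF _ finC d2] finA finB by blast
  ultimately have "card (Dv 1 N) = card ?A + card ?B + card ?C" using U by simp
  then show ?thesis using cB cC by simp
qed

definition Dsame :: "nat \<Rightarrow> (nat\<times>nat) set" where "Dsame N = {(d,e). d<e \<and> d*e = N \<and> even (d+e)}"
definition Dmix :: "nat \<Rightarrow> (nat\<times>nat) set" where "Dmix N = {(d,e). d<e \<and> d*e = N \<and> odd (d+e)}"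

lemma card_Dl_split: assumes "0<N" shows "card (Dl N) = card (Dsame N) + card (Dmix N)"
proof -
  have fin: "finite (Dl N)" by (rule finite_subset[OF _ finite_Dv[OF assms, of 1]]) (auto simp: Dl_def)
  have "Dl N = Dsame N \<union> Dmix N" by (auto simp: Dl_def Dsame_def Dmix_def)
  moreover have "Dsame N \<inter> Dmix N = {}" by (auto simp: Dsame_def Dmix_def)
  moreover have "finite (Dsame N)" "finite (Dmix N)"
    by (rule finite_subset[OF _ fin], auto simp: Dl_def Dsame_def Dmix_def)+
  ultimately show ?thesis by (simp add: card_Un_disjoint)
qed

lemma Dmix_odd: "odd N \<Longrightarrow> Dmix N = {}"
  by (auto simp: Dmix_def)

lemma even_cofactor: "d*e = (N::nat) \<Longrightarrow> odd d \<Longrightarrow> even N \<Longrightarrow> even e"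
  by auto

lemma card_Dmix_even: assumes "0<N" "even N"
  shows "card (Dmix N) = card {(d,e). d*e = N \<and> odd d}"
proof -
  let ?X = "{(d,e). d*e = N \<and> odd d}"
  let ?f = "\<lambda>(d::nat,e::nat). if odd d then (d,e) else (e,d)"
  let ?g = "\<lambda>(d::nat,e::nat). (min d e, max d e)"
  have finD: "finite (Dv 1 N)" using finite_Dv assms by blast
  have finM: "finite (Dmix N)" by (rule finite_subset[OF _ finD]) (auto simp: Dmix_def)
  have finX: "finite ?X" by (rule finite_subset[OF _ finD]) auto
  show ?thesis
  proof (rule card_bij_eq[of ?f _ _ ?g])
    show "inj_on ?f (Dmix N)"
    proof (rule inj_onI)
      fix x y assume x: "x \<in> Dmix N" and y: "y \<in> Dmix N" and e: "?f x = ?f y"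
      obtain d1 e1 where x1: "x = (d1,e1)" by (cases x)
      obtain d2 e2 where y1: "y = (d2,e2)" by (cases y)
      have h: "d1 < e1" "odd (d1+e1)" "d2 < e2" "odd (d2+e2)" using x y x1 y1 by (auto simp: Dmix_def)
      show "x = y"
      proof (cases "odd d1")
        case True
        show ?thesis
        proof (cases "odd d2")
          case True
          then show ?thesis using \<open>odd d1\<close> e x1 y1 by simp
        next
          case False
          then have "(d1,e1) = (e2,d2)" using \<open>odd d1\<close> e x1 y1 by simp
          then show ?thesis using h by simp
        qed
      next
        case False
        show ?thesis
        proof (cases "odd d2")
          case True
          then have "(e1,d1) = (d2,e2)" using False e x1 y1 by simp
          then show ?thesis using h by simp
        next
          case False
          then show ?thesis using \<open>\<not> odd d1\<close> e x1 y1 by simp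
        qed
      qed
    qed
    show "?f ` Dmix N \<subseteq> ?X"
    proof
      fix y assume "y \<in> ?f ` Dmix N"
      then obtain d e where de: "(d,e) \<in> Dmix N" "y = ?f (d,e)" by auto
      have h: "d*e = N" "odd (d+e)" using de by (auto simp: Dmix_def)
      show "y \<in> ?X"
      proof (cases "odd d")
        case True then show ?thesis using de h by simp
      next
        case False then have "odd e" using h by simp
        then show ?thesis using de h False by (simp add: mult.commute)
      qed
    qed
    show "inj_on ?g ?X"
    proof (rule inj_onI)
      fix x y assume x: "x \<in> ?X" and y: "y \<in> ?X" and e: "?g x = ?g y"
      obtain d1 e1 where x1: "x = (d1,e1)" by (cases x)
      obtain d2 e2 where y1: "y = (d2,e2)" by (cases y)
      have h1: "d1*e1 = N" "odd d1" "d2*e2 = N" "odd d2" using x y x1 y1 by auto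
      have "even e1" "even e2" using even_cofactor h1 assms(2) by blast+
      then show "x = y" using e x1 y1 h1
        by (cases "d1 \<le> e1"; cases "d2 \<le> e2"; simp add: min_def max_def; presburger)
    qed
    show "?g ` ?X \<subseteq> Dmix N"
    proof
      fix y assume "y \<in> ?g ` ?X"
      then obtain d e where de: "(d,e) \<in> ?X" "y = (min d e, max d e)" by auto
      have h: "d*e = N" "odd d" using de by auto
      have "even e" using even_cofactor h assms(2) by blast
      then have "d \<noteq> e" using h by auto
      show "y \<in> Dmix N"
      proof (cases "d < e")
        case True then show ?thesis using de h \<open>even e\<close> by (simp add: Dmix_def)
      next
        case False then have "e < d" using \<open>d \<noteq> e\<close> by simp
        then show ?thesis using de h \<open>even e\<close> by (simp add: Dmix_def mult.commute)
      qed
    qed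
  qed (use finM finX in auto)
qed

lemma card_even_div: "card {(d,e). d*e = N \<and> even d} = card (Dv 2 N)"
proof -
  have "{(d,e). d*e = N \<and> even d} = (\<lambda>(d,e). (2*d, e)) ` Dv 2 N"
  proof (rule set_eqI, rule iffI)
    fix x assume "x \<in> {(d,e). d*e = N \<and> even d}"
    then obtain d e where x: "x = (d,e)" "d*e = N" "even d" by auto
    then obtain k where k: "d = 2*k" by auto
    then have "(k,e) \<in> Dv 2 N" using x by (simp add: mult.assoc)
    moreover have "x = (\<lambda>(d,e). (2*d, e)) (k,e)" using x k by simp
    ultimately show "x \<in> (\<lambda>(d,e). (2*d, e)) ` Dv 2 N" by blast
  qed (auto simp: mult.assoc)
  moreover have "inj_on (\<lambda>(d::nat,e::nat). (2*d, e)) (Dv 2 N)" by (auto simp: inj_on_def)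
  ultimately show ?thesis by (simp add: card_image)
qed

lemma card_Dmix_mod2: assumes "0<N" "even N"
  shows "(card (Dmix N) + sqc 1 N + sqc 2 N) mod 2 = 0"
proof -
  have fin: "finite (Dv 1 N)" using finite_Dv assms by blast
  have "Dv 1 N = {(d,e). d*e = N \<and> odd d} \<union> {(d,e). d*e = N \<and> even d}" by auto
  moreover have "finite {(d,e). d*e = N \<and> odd d}" "finite {(d,e). d*e = N \<and> even d}"
    by (rule finite_subset[OF _ fin], auto)+
  ultimately have "card (Dv 1 N) = card {(d,e). d*e = N \<and> odd d} + card {(d,e). d*e = N \<and> even d}"
    by (simp add: card_Un_disjoint disjoint_iff)
  then have A: "card (Dv 1 N) = card (Dmix N) + card (Dv 2 N)"
    using card_Dmix_even[OF assms] card_even_div by simp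
  have h1: "(card (Dmix N) + card (Dv 2 N)) mod 2 = sqc 1 N"
    using Dv_mod2[OF assms(1), of 1] A by simp
  have h2: "card (Dv 2 N) mod 2 = sqc 2 N"
    using Dv_mod2[OF assms(1), of 2] by simp
  show ?thesis
  proof -
    fix a b u v :: nat
    have gen: "\<And>a b u v::nat. (a+b) mod 2 = u \<Longrightarrow> b mod 2 = v \<Longrightarrow> (a+u+v) mod 2 = 0"
      by presburger
    show ?thesis by (rule gen[OF h1 h2])
  qed
qed


lemma QP_split2:
  assumes "\<And>p q r s. P p q r s \<longleftrightarrow> (P1 p q r s \<or> P2 p q r s)"
      and "\<And>p q r s. \<not> (P1 p q r s \<and> P2 p q r s)"
  shows "card (QP N P) = card (QP N P1) + card (QP N P2)"
proof -
  have "QP N P = QP N P1 \<union> QP N P2" using assms(1) by (auto simp: QP_def)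
  moreover have "QP N P1 \<inter> QP N P2 = {}" using assms(2) by (auto simp: QP_def)
  ultimately show ?thesis by (simp add: card_Un_disjoint)
qed

lemma QP_eq:
  assumes "\<And>p q r s. P p q r s \<longleftrightarrow> P' p q r s"
  shows "QP N P = QP N P'"
  using assms by (auto simp: QP_def)

lemma Ase_mod2:
  "card (QP N (\<lambda>p q r s. p<q \<and> even s)) mod 2 =
   (card (QP N (\<lambda>p q r s. p<q \<and> s = p \<and> q = r + p)) + card (QP N (\<lambda>p q r s. p<q \<and> r = s \<and> odd (p+q)))) mod 2"
proof -
  define C where "C = card (QP N (\<lambda>p q r s. p<q \<and> even (p+q+r)))"
  define Od where "Od = card (QP N (\<lambda>p q r s. p<q \<and> odd (p+q+r+s)))"
  define CO where "CO = card (QP N (\<lambda>p q r s. p<q \<and> even (p+q+r) \<and> odd (p+q+r+s)))"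
  define Cn where "Cn = card (QP N (\<lambda>p q r s. p<q \<and> even (p+q+r) \<and> \<not> odd (p+q+r+s)))"
  define On where "On = card (QP N (\<lambda>p q r s. p<q \<and> \<not> even (p+q+r) \<and> odd (p+q+r+s)))"
  have 1: "C = CO + Cn" unfolding C_def CO_def Cn_def by (rule QP_split2) auto
  have 2: "Od = CO + On" unfolding Od_def CO_def On_def by (rule QP_split2) auto
  have 3: "card (QP N (\<lambda>p q r s. p<q \<and> even s)) = Cn + On" unfolding Cn_def On_def
    by (rule QP_split2) auto
  define O1 where "O1 = card (QP N (\<lambda>p q r s. p<q \<and> r<s \<and> odd (p+q+r+s)))"
  define O2 where "O2 = card (QP N (\<lambda>p q r s. p<q \<and> s<r \<and> odd (p+q+r+s)))"
  define O3 where "O3 = card (QP N (\<lambda>p q r s. p<q \<and> r = s \<and> odd (p+q)))"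
  define O12 where "O12 = card (QP N (\<lambda>p q r s. p<q \<and> r \<noteq> s \<and> odd (p+q+r+s)))"
  have 4: "Od = O12 + O3" unfolding Od_def O12_def O3_def by (rule QP_split2) auto
  have 5: "O12 = O1 + O2" unfolding O12_def O1_def O2_def by (rule QP_split2) auto
  have 6: "O1 mod 2 = 0" unfolding O1_def by (rule tau1_O)
  have 7: "O2 mod 2 = 0" unfolding O2_def by (rule tau2_O)
  have 8: "C mod 2 = card (QP N (\<lambda>p q r s. p<q \<and> s = p \<and> q = r + p)) mod 2"
    unfolding C_def by (rule psi_C)
  have g1: "\<And>O12 O1 O2::nat. O12 = O1 + O2 \<Longrightarrow> O1 mod 2 = 0 \<Longrightarrow> O2 mod 2 = 0 \<Longrightarrow> O12 mod 2 = 0"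
    by presburger
  have O12: "O12 mod 2 = 0" by (rule g1[OF 5 6 7])
  have g2: "\<And>C Od CO Cn On A::nat. C = CO + Cn \<Longrightarrow> Od = CO + On \<Longrightarrow> A = Cn + On
     \<Longrightarrow> A mod 2 = (C + Od) mod 2" by presburger
  have A: "card (QP N (\<lambda>p q r s. p<q \<and> even s)) mod 2 = (C + Od) mod 2" by (rule g2[OF 1 2 3])
  have g3: "\<And>A C Od F::nat. A mod 2 = (C + Od) mod 2 \<Longrightarrow> C mod 2 = F mod 2 \<Longrightarrow> A mod 2 = (F + Od) mod 2"
    by presburger
  have g4: "\<And>Od O12 O3::nat. Od = O12 + O3 \<Longrightarrow> O12 mod 2 = 0 \<Longrightarrow> Od mod 2 = O3 mod 2"
    by presburger
  have g5: "\<And>A F Od O3::nat. A mod 2 = (F + Od) mod 2 \<Longrightarrow> Od mod 2 = O3 mod 2 \<Longrightarrow> A mod 2 = (F + O3) mod 2"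
    by presburger
  show ?thesis unfolding O3_def[symmetric] by (rule g5[OF g3[OF A 8] g4[OF 4 O12]])
qed

definition Tset :: "nat \<Rightarrow> q4 set" where
  "Tset N = {(a,b,i,j). 0<a \<and> a<b \<and> 0<i \<and> 0<j \<and> a*i+b*j = N \<and> (odd b \<longrightarrow> b < 2*a)}"

lemma Tset_sub: "Tset N \<subseteq> QP N (\<lambda>p q r s. True)"
  by (auto simp: Tset_def)

lemma finite_Tset: "finite (Tset N)"
  by (rule finite_subset[OF Tset_sub]) simp

lemma card_B1:
  "card {x\<in>Tset N. case x of (a,b,i,j) \<Rightarrow> b < 2*a} = card (QP N (\<lambda>p q r s. p<q \<and> r<s))"
proof -
  let ?B = "{x\<in>Tset N. case x of (a,b,i,j) \<Rightarrow> b < 2*a}"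
  let ?W = "QP N (\<lambda>p q r s. p<q \<and> r<s)"
  let ?f = "\<lambda>(a::nat,b::nat,i::nat,j::nat). (b-a, a, j, i+j)"
  let ?g = "\<lambda>(p::nat,q::nat,r::nat,s::nat). (q, p+q, s-r, r)"
  show ?thesis
  proof (rule card_bij_eq[of ?f _ _ ?g])
    show "inj_on ?f ?B"
    proof (rule inj_onI)
      fix x y assume x: "x \<in> ?B" and y: "y \<in> ?B" and e: "?f x = ?f y"
      obtain a b i j where x1: "x = (a,b,i,j)" using prod_cases4 by blast
      obtain a' b' i' j' where y1: "y = (a',b',i',j')" using prod_cases4 by blast
      have "a<b" "a'<b'" using x y x1 y1 by (auto simp: Tset_def)
      then show "x = y" using e x1 y1 by auto
    qed
    show "?f ` ?B \<subseteq> ?W"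
    proof
      fix y assume "y \<in> ?f ` ?B"
      then obtain a b i j where x: "(a,b,i,j) \<in> ?B" "y = ?f (a,b,i,j)" by auto
      then have h: "0<a" "a<b" "0<i" "0<j" "a*i+b*j = N" "b < 2*a" by (auto simp: Tset_def)
      then obtain k where k: "b = a + k" "0 < k" using less_imp_add_positive by blast
      have "(b-a)*j + a*(i+j) = N" using h k by (simp add: algebra_simps)
      then show "y \<in> ?W" using x h k by auto
    qed
    show "inj_on ?g ?W" by (auto simp: inj_on_def)
    show "?g ` ?W \<subseteq> ?B"
    proof
      fix y assume "y \<in> ?g ` ?W"
      then obtain p q r s where x: "(p,q,r,s) \<in> ?W" "y = ?g (p,q,r,s)" by auto
      then have h: "0<p" "p<q" "0<r" "r<s" "p*r+q*s = N" by auto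
      then obtain k where k: "s = r + k" "0 < k" using less_imp_add_positive by blast
      have "q*(s-r) + (p+q)*r = N" using h k by (simp add: algebra_simps)
      moreover have "p+q < 2*q" using h by simp
      ultimately show "y \<in> ?B" using x h k by (auto simp: Tset_def)
    qed
  qed (simp_all add: finite_Tset)
qed

lemma card_B2:
  "card {x\<in>Tset N. case x of (a,b,i,j) \<Rightarrow> \<not> b < 2*a} = card (QP N (\<lambda>p q r s. p\<le>q \<and> even s))"
proof -
  let ?B = "{x\<in>Tset N. case x of (a,b,i,j) \<Rightarrow> \<not> b < 2*a}"
  let ?W = "QP N (\<lambda>p q r s. p\<le>q \<and> even s)"
  let ?f = "\<lambda>(a::nat,b::nat,i::nat,j::nat). (a, b div 2, i, 2*j)"
  let ?g = "\<lambda>(p::nat,q::nat,r::nat,s::nat). (p, 2*q, r, s div 2)"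
  show ?thesis
  proof (rule card_bij_eq[of ?f _ _ ?g])
    show "inj_on ?f ?B"
    proof (rule inj_onI)
      fix x y assume x: "x \<in> ?B" and y: "y \<in> ?B" and e: "?f x = ?f y"
      obtain a b i j where x1: "x = (a,b,i,j)" using prod_cases4 by blast
      obtain a' b' i' j' where y1: "y = (a',b',i',j')" using prod_cases4 by blast
      have "even b" "even b'" using x y x1 y1 by (auto simp: Tset_def)
      then show "x = y" using e x1 y1 by auto
    qed
    show "?f ` ?B \<subseteq> ?W"
    proof
      fix y assume "y \<in> ?f ` ?B"
      then obtain a b i j where x: "(a,b,i,j) \<in> ?B" "y = ?f (a,b,i,j)" by auto
      then have h: "0<a" "a<b" "0<i" "0<j" "a*i+b*j = N" "2*a \<le> b" "even b" by (auto simp: Tset_def)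
      then obtain k where k: "b = 2*k" by auto
      have "a*i + k*(2*j) = N" using h k by (simp add: algebra_simps)
      then show "y \<in> ?W" using x h k by auto
    qed
    show "inj_on ?g ?W"
    proof (rule inj_onI)
      fix x y assume x: "x \<in> ?W" and y: "y \<in> ?W" and e: "?g x = ?g y"
      obtain a b i j where x1: "x = (a,b,i,j)" using prod_cases4 by blast
      obtain a' b' i' j' where y1: "y = (a',b',i',j')" using prod_cases4 by blast
      have "even j" "even j'" using x y x1 y1 by auto
      then show "x = y" using e x1 y1 by auto
    qed
    show "?g ` ?W \<subseteq> ?B"
    proof
      fix y assume "y \<in> ?g ` ?W"
      then obtain p q r s where x: "(p,q,r,s) \<in> ?W" "y = ?g (p,q,r,s)" by auto
      then have h: "0<p" "p\<le>q" "0<r" "0<s" "even s" "p*r+q*s = N" by auto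
      then obtain k where k: "s = 2*k" by auto
      have "p*r + (2*q)*k = N" using h k by (simp add: algebra_simps)
      then show "y \<in> ?B" using x h k by (auto simp: Tset_def)
    qed
  qed (simp_all add: finite_Tset)
qed

lemma card_filter_split: assumes "finite S" shows "card S = card {x\<in>S. P x} + card {x\<in>S. \<not> P x}"
proof -
  have f1: "finite {x\<in>S. P x}" and f2: "finite {x\<in>S. \<not> P x}" using assms by simp_all
  have d: "{x\<in>S. P x} \<inter> {x\<in>S. \<not> P x} = {}" by auto
  have u: "S = {x\<in>S. P x} \<union> {x\<in>S. \<not> P x}" by auto
  show ?thesis by (subst u) (rule card_Un_disjoint[OF f1 f2 d])
qed

lemma card_Tset:
  "card (Tset N) = card (QP N (\<lambda>p q r s. p<q \<and> r<s)) + card (QP N (\<lambda>p q r s. p<q \<and> even s))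
     + card (QP N (\<lambda>p q r s. p=q \<and> even s))"
proof -
  have "card (Tset N) = card {x\<in>Tset N. case x of (a,b,i,j) \<Rightarrow> b < 2*a} + card {x\<in>Tset N. \<not> (case x of (a,b,i,j) \<Rightarrow> b < 2*a)}"
    by (rule card_filter_split[OF finite_Tset])
  moreover have "{x\<in>Tset N. \<not> (case x of (a,b,i,j) \<Rightarrow> b < 2*a)} = {x\<in>Tset N. case x of (a,b,i,j) \<Rightarrow> \<not> b < 2*a}"
    by (auto split: prod.splits)
  moreover have "card (QP N (\<lambda>p q r s. p\<le>q \<and> even s)) = card (QP N (\<lambda>p q r s. p<q \<and> even s)) + card (QP N (\<lambda>p q r s. p=q \<and> even s))"
    by (rule QP_split2) auto
  ultimately show ?thesis using card_B1 card_B2 by simp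
qed


lemma card_Eodd:
  "card (QP N (\<lambda>p q r s. p<q \<and> r = s \<and> odd (p+q))) = card (QP N (\<lambda>p q r s. p = q \<and> even s \<and> odd r))"
proof -
  let ?A = "QP N (\<lambda>p q r s. p<q \<and> r = s \<and> odd (p+q))"
  let ?B = "QP N (\<lambda>p q r s. p = q \<and> even s \<and> odd r)"
  let ?f = "\<lambda>(p::nat,q::nat,r::nat,s::nat). (r, r, q-p, 2*p)"
  let ?g = "\<lambda>(p::nat,q::nat,r::nat,s::nat). (s div 2, s div 2 + r, p, p)"
  show ?thesis
  proof (rule card_bij_eq[of ?f _ _ ?g])
    show "inj_on ?f ?A"
    proof (rule inj_onI)
      fix x y assume x: "x \<in> ?A" and y: "y \<in> ?A" and e: "?f x = ?f y"
      obtain a b i j where x1: "x = (a,b,i,j)" using prod_cases4 by blast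
      obtain a' b' i' j' where y1: "y = (a',b',i',j')" using prod_cases4 by blast
      have h: "a<b" "a'<b'" "i = j" "i' = j'" using x y x1 y1 by auto
      have "i = i'" "b - a = b' - a'" "2*a = 2*a'" using e x1 y1 by auto
      then show "x = y" using h x1 y1 by auto
    qed
    show "?f ` ?A \<subseteq> ?B"
    proof
      fix y assume "y \<in> ?f ` ?A"
      then obtain p q r s where x: "(p,q,r,s) \<in> ?A" "y = ?f (p,q,r,s)" by auto
      then have h: "0<p" "p<q" "0<r" "r = s" "p*r+q*s = N" "odd (p+q)" by auto
      then obtain k where k: "q = p + k" "0 < k" using less_imp_add_positive by blast
      have "r*k + r*(2*p) = N" using h k by (simp add: algebra_simps)
      moreover have "odd k" using h(6) k(1) by presburger
      ultimately show "y \<in> ?B" using x h k by auto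
    qed
    show "inj_on ?g ?B"
    proof (rule inj_onI)
      fix x y assume x: "x \<in> ?B" and y: "y \<in> ?B" and e: "?g x = ?g y"
      obtain a b i j where x1: "x = (a,b,i,j)" using prod_cases4 by blast
      obtain a' b' i' j' where y1: "y = (a',b',i',j')" using prod_cases4 by blast
      have h: "a = b" "a' = b'" "even j" "even j'" using x y x1 y1 by auto
      have "j div 2 = j' div 2" "i = i'" "a = a'" using e x1 y1 by auto
      then show "x = y" using h x1 y1 by auto
    qed
    show "?g ` ?B \<subseteq> ?A"
    proof
      fix y assume "y \<in> ?g ` ?B"
      then obtain p q r s where x: "(p,q,r,s) \<in> ?B" "y = ?g (p,q,r,s)" by auto
      then have h: "0<p" "p = q" "0<r" "0<s" "even s" "odd r" "p*r+q*s = N" by auto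
      then obtain k where k: "s = 2*k" by auto
      have "k*p + (k+r)*p = N" using h k by (simp add: algebra_simps)
      moreover have "odd (k + (k+r))" using h(6) by presburger
      moreover have "0 < k" using h k by simp
      ultimately show "y \<in> ?A" using x h k by auto
    qed
  qed simp_all
qed

lemma card_Fix: assumes "0<N" shows
  "card (QP N (\<lambda>p q r s. p<q \<and> s = p \<and> q = r + p)) = card (Dsame N)"
proof -
  let ?A = "QP N (\<lambda>p q r s. p<q \<and> s = p \<and> q = r + p)"
  let ?f = "\<lambda>(p::nat,q::nat,r::nat,s::nat). (p, p + 2*r)"
  let ?g = "\<lambda>(d::nat,e::nat). (d, (d+e) div 2, (e-d) div 2, d)"
  have finD: "finite (Dsame N)"
    by (rule finite_subset[OF _ finite_Dv[OF assms, of 1]]) (auto simp: Dsame_def)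
  show ?thesis
  proof (rule card_bij_eq[of ?f _ _ ?g])
    show "inj_on ?f ?A"
    proof (rule inj_onI)
      fix x y assume x: "x \<in> ?A" and y: "y \<in> ?A" and e: "?f x = ?f y"
      obtain a b i j where x1: "x = (a,b,i,j)" using prod_cases4 by blast
      obtain a' b' i' j' where y1: "y = (a',b',i',j')" using prod_cases4 by blast
      have h: "j = a" "b = i + a" "j' = a'" "b' = i' + a'" using x y x1 y1 by auto
      have "a = a'" "i = i'" using e x1 y1 by auto
      then show "x = y" using h x1 y1 by auto
    qed
    show "?f ` ?A \<subseteq> Dsame N"
    proof
      fix y assume "y \<in> ?f ` ?A"
      then obtain p q r s where x: "(p,q,r,s) \<in> ?A" "y = ?f (p,q,r,s)" by auto
      then have h: "0<p" "0<r" "s = p" "q = r + p" "p*r+q*s = N" by auto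
      have "p*(p+2*r) = N" using h by (simp add: algebra_simps)
      then show "y \<in> Dsame N" using x h by (auto simp: Dsame_def)
    qed
    show "inj_on ?g (Dsame N)"
    proof (rule inj_onI)
      fix x y assume x: "x \<in> Dsame N" and y: "y \<in> Dsame N" and e: "?g x = ?g y"
      obtain d e1 where x1: "x = (d,e1)" by (cases x)
      obtain d' e2 where y1: "y = (d',e2)" by (cases y)
      have ev: "even (d+e1)" "even (d'+e2)" using x y x1 y1 by (auto simp: Dsame_def)
      have "d = d'" "(d+e1) div 2 = (d'+e2) div 2" using e x1 y1 by auto
      then have "d + e1 = d' + e2" using ev by (metis dvd_mult_div_cancel)
      then show "x = y" using x1 y1 \<open>d = d'\<close> by simp
    qed
    show "?g ` Dsame N \<subseteq> ?A"
    proof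
      fix y assume "y \<in> ?g ` Dsame N"
      then obtain d e where x: "(d,e) \<in> Dsame N" "y = ?g (d,e)" by auto
      then have h: "d<e" "d*e = N" "even (d+e)" by (auto simp: Dsame_def)
      then obtain k where k: "e = d + k" "0<k" using less_imp_add_positive by blast
      have "even k" using h(3) k(1) by presburger
      then obtain m where m: "k = 2*m" by auto
      have "0 < d"
      proof (rule ccontr)
        assume "\<not> 0 < d" then have "d = 0" by simp
        then show False using h(2) assms by simp
      qed
      have y: "y = (d, d + m, m, d)" using x(2) k m by simp
      have "d*m + (d+m)*d = N" using h(2) k m by (simp add: algebra_simps)
      then show "y \<in> ?A" using y \<open>0<d\<close> k m by simp
    qed
  qed (simp_all add: finD)
qed

lemma card_Dse_re_mod2: assumes "0<N"
  shows "card (QP N (\<lambda>p q r s. p = q \<and> even s \<and> \<not> odd r)) mod 2 = sqc 4 N"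
proof -
  let ?P = "\<lambda>p q r s. p = q \<and> even s \<and> \<not> odd r"
  let ?f = "\<lambda>(p::nat,q::nat,r::nat,s::nat). (p, q, s, r)"
  have 1: "card (QP N ?P) mod 2 = card {x\<in>QP N ?P. ?f x = x} mod 2"
  proof (rule invol_QP)
    fix p q r s assume a: "(p,q,r,s) \<in> QP N ?P"
    have h: "0<p" "0<q" "0<r" "0<s" "p*r+q*s = N" "p = q" "even s" "even r" using a[unfolded QP_mem] by blast+
    have e: "q*r + q*s = N" using h(5) h(6) by simp
    then show "?f (p,q,r,s) \<in> QP N ?P" using h by (simp add: add.commute)
  qed simp
  have E: "{x\<in>QP N ?P. ?f x = x} = QP N (\<lambda>p q r s. p = q \<and> r = s \<and> even r)"
  proof (rule set_eqI)
    fix x :: q4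
    obtain p q r s where x: "x = (p,q,r,s)" using prod_cases4 by blast
    show "x \<in> {x\<in>QP N ?P. ?f x = x} \<longleftrightarrow> x \<in> QP N (\<lambda>p q r s. p = q \<and> r = s \<and> even r)"
      unfolding x by auto
  qed
  let ?A = "QP N (\<lambda>p q r s. p = q \<and> r = s \<and> even r)"
  have 2: "card ?A = card (Dv 4 N)"
  proof -
    let ?h = "\<lambda>(d::nat,e::nat). (d, d, 2*e, 2*e)"
    have "?A = ?h ` Dv 4 N"
    proof (rule set_eqI, rule iffI)
      fix x assume x: "x \<in> ?A"
      obtain p q r s where x1: "x = (p,q,r,s)" using prod_cases4 by blast
      then have h: "0<p" "p = q" "r = s" "even r" "p*r+q*s = N" using x by auto
      then obtain k where k: "r = 2*k" by auto
      have "N = p*r + q*s" using h by simp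
      also have "\<dots> = p*(2*k) + p*(2*k)" using h k by simp
      also have "\<dots> = 4*p*k" by simp
      finally have "4*p*k = N" by simp
      then have "(p,k) \<in> Dv 4 N" by simp
      moreover have "x = ?h (p,k)" using x1 h k by simp
      ultimately show "x \<in> ?h ` Dv 4 N" by blast
    next
      fix x assume "x \<in> ?h ` Dv 4 N"
      then obtain d e where de: "4*d*e = N" "x = (d,d,2*e,2*e)" by auto
      then have "d \<noteq> 0" "e \<noteq> 0" using assms by auto
      moreover have "d*(2*e) + d*(2*e) = N" using de by (simp add: algebra_simps)
      ultimately show "x \<in> ?A" using de by simp
    qed
    moreover have "inj_on ?h (Dv 4 N)" by (auto simp: inj_on_def)
    ultimately show ?thesis by (simp add: card_image)
  qed
  show ?thesis using 1 2 Dv_mod2[OF assms, of 4] unfolding E by simp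
qed

definition S0 :: "nat \<Rightarrow> (nat \<times> nat) set" where
  "S0 N = {(p,q). 0<p \<and> p<q \<and> p*p+q*q = N}"

lemma finite_S0: "finite (S0 N)"
proof -
  have "S0 N \<subseteq> {0..N} \<times> {0..N}"
  proof
    fix x assume "x \<in> S0 N"
    then obtain p q where x: "x = (p,q)" "0<p" "p<q" "p*p+q*q = N" by (auto simp: S0_def)
    have "p*1 \<le> p*p" "q*1 \<le> q*q" using x by (intro mult_le_mono; simp)+
    then have "p \<le> N" "q \<le> N" using x(4) by linarith+
    then show "x \<in> {0..N} \<times> {0..N}" using x by auto
  qed
  then show ?thesis by (rule finite_subset) auto
qed

lemma card_W_mod2:
  "card (QP N (\<lambda>p q r s. p<q \<and> r<s)) mod 2 = card (S0 N) mod 2"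
proof -
  let ?h = "\<lambda>(p::nat,q::nat). (p,q,p,q)"
  have "QP N (\<lambda>p q r s. p<q \<and> r = p \<and> s = q) = ?h ` S0 N"
  proof (rule set_eqI, rule iffI)
    fix x assume x: "x \<in> QP N (\<lambda>p q r s. p<q \<and> r = p \<and> s = q)"
    obtain p q r s where x1: "x = (p,q,r,s)" using prod_cases4 by blast
    then have "(p,q) \<in> S0 N" "x = ?h (p,q)" using x by (auto simp: S0_def)
    then show "x \<in> ?h ` S0 N" by blast
  next
    fix x assume "x \<in> ?h ` S0 N"
    then obtain p q where "(p,q) \<in> S0 N" "x = (p,q,p,q)" by auto
    then show "x \<in> QP N (\<lambda>p q r s. p<q \<and> r = p \<and> s = q)" by (auto simp: S0_def)
  qed
  moreover have "inj_on ?h (S0 N)" by (auto simp: inj_on_def)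
  ultimately have "card (QP N (\<lambda>p q r s. p<q \<and> r = p \<and> s = q)) = card (S0 N)"
    by (simp add: card_image)
  then show ?thesis using tau1_W[of N] by simp
qed

definition Dre :: "nat \<Rightarrow> nat" where
  "Dre N = card (QP N (\<lambda>p q r s. p = q \<and> even s \<and> \<not> odd r))"

lemma T_mod2: assumes "0<N" shows "card (Tset N) mod 2 = (card (S0 N) + card (Dsame N) + Dre N) mod 2"
proof -
  have a: "card (QP N (\<lambda>p q r s. p=q \<and> even s)) =
       card (QP N (\<lambda>p q r s. p = q \<and> even s \<and> odd r)) + Dre N"
    unfolding Dre_def by (rule QP_split2) auto
  have gen1: "\<And>T W A X S :: nat. T = W + A + X \<Longrightarrow> W mod 2 = S mod 2 \<Longrightarrow>
      T mod 2 = (S + A + X) mod 2" by presburger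
  have gen2: "\<And>A Dro Dr S Ds :: nat. A mod 2 = (Ds + Dro) mod 2 \<Longrightarrow>
      (S + A + (Dro + Dr)) mod 2 = (S + Ds + Dr) mod 2" by presburger
  have gen: "\<And>T W A Dro Dr S Ds :: nat. T = W + A + (Dro + Dr) \<Longrightarrow> W mod 2 = S mod 2 \<Longrightarrow>
      A mod 2 = (Ds + Dro) mod 2 \<Longrightarrow> T mod 2 = (S + Ds + Dr) mod 2"
    using gen1 gen2 by metis
  have t: "card (Tset N) = card (QP N (\<lambda>p q r s. p<q \<and> r<s)) + card (QP N (\<lambda>p q r s. p<q \<and> even s))
     + (card (QP N (\<lambda>p q r s. p = q \<and> even s \<and> odd r)) + Dre N)"
    using card_Tset[of N] a by simp
  have b: "card (QP N (\<lambda>p q r s. p<q \<and> even s)) mod 2 = (card (Dsame N) + card (QP N (\<lambda>p q r s. p = q \<and> even s \<and> odd r))) mod 2"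
    using Ase_mod2[of N] card_Eodd[of N] card_Fix[OF assms] by simp
  show ?thesis
    by (rule gen[OF t card_W_mod2 b])
qed


definition VM :: "nat \<Rightarrow> nat multiset set" where
  "VM N = {M. (\<forall>k\<in>#M. 0<k) \<and> sum_mset M = N \<and> M \<noteq> {#} \<and> (\<forall>k\<in>#M. odd k \<longrightarrow> k < 2 * Min (set_mset M))}"

definition Fib :: "nat multiset \<Rightarrow> nat set set" where
  "Fib M = {Ov. Ov \<subseteq> set_mset M \<and> Min (set_mset M) \<in> Ov}"

lemma mem_le_sum_mset: "(k::nat) \<in># M \<Longrightarrow> k \<le> sum_mset M"
proof -
  assume "k \<in># M"
  then have "sum_mset M = k + sum_mset (M - {#k#})" by (rule sum_mset.remove)
  then show ?thesis by simp
qed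

lemma size_le_sum_mset: "(\<forall>k\<in>#M. (0::nat)<k) \<Longrightarrow> size M \<le> sum_mset M"
proof (induction M)
  case empty then show ?case by simp
next
  case (add x M)
  then show ?case by auto
qed

lemma finite_VM: "finite (VM N)"
proof -
  have "VM N \<subseteq> (\<Union>n\<in>{0..N}. multisets_of_size {0..N} n)"
  proof
    fix M assume M: "M \<in> VM N"
    then have p: "\<forall>k\<in>#M. 0<k" and s: "sum_mset M = N" by (auto simp: VM_def)
    have "set_mset M \<subseteq> {0..N}" using mem_le_sum_mset s by auto
    moreover have "size M \<le> N" using size_le_sum_mset[OF p] s by simp
    ultimately show "M \<in> (\<Union>n\<in>{0..N}. multisets_of_size {0..N} n)"
      by (auto simp: multisets_of_size_def)
  qed
  moreover have "finite (\<Union>n\<in>{0..N}. multisets_of_size {0..N} n)" by auto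
  ultimately show ?thesis by (rule finite_subset)
qed

lemma card_Fib: assumes "M \<noteq> {#}" shows "card (Fib M) = 2 ^ (card (set_mset M) - 1)"
proof -
  let ?S = "set_mset M" let ?m = "Min (set_mset M)"
  have fin: "finite ?S" by simp
  have mS: "?m \<in> ?S" using assms by simp
  have "Fib M = insert ?m ` Pow (?S - {?m})"
  proof (rule set_eqI, rule iffI)
    fix Ov assume "Ov \<in> Fib M"
    then have a: "Ov \<subseteq> ?S" "?m \<in> Ov" by (auto simp: Fib_def)
    then have "Ov = insert ?m (Ov - {?m})" "Ov - {?m} \<in> Pow (?S - {?m})" by auto
    then show "Ov \<in> insert ?m ` Pow (?S - {?m})" by blast
  next
    fix Ov assume "Ov \<in> insert ?m ` Pow (?S - {?m})"
    then show "Ov \<in> Fib M" using mS by (auto simp: Fib_def)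
  qed
  moreover have "inj_on (insert ?m) (Pow (?S - {?m}))"
  proof (rule inj_onI)
    fix A B assume A: "A \<in> Pow (?S - {?m})" and B: "B \<in> Pow (?S - {?m})" and e: "insert ?m A = insert ?m B"
    have "?m \<notin> A" "?m \<notin> B" using A B by auto
    then have "A = insert ?m A - {?m}" "B = insert ?m B - {?m}" by auto
    then show "A = B" using e by metis
  qed
  ultimately have "card (Fib M) = card (Pow (?S - {?m}))" by (simp add: card_image)
  also have "\<dots> = 2 ^ card (?S - {?m})" using fin by (simp add: card_Pow)
  also have "card (?S - {?m}) = card ?S - 1" using mS fin by simp
  finally show ?thesis .
qed

lemma pbar_sum: "pbar_omega N = (\<Sum>M\<in>VM N. 2 ^ (card (set_mset M) - 1))"
proof -
  have "{(M, Ov) \<in> overpartitions N. M \<noteq> {#} \<and> Min (set_mset M) \<in> Ov \<and>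
       (\<forall>k \<in># M. odd k \<longrightarrow> k < 2 * Min (set_mset M))} = Sigma (VM N) Fib"
    by (auto simp: overpartitions_def VM_def Fib_def)
  then have "pbar_omega N = card (Sigma (VM N) Fib)" by (simp add: pbar_omega_def)
  also have "\<dots> = (\<Sum>M\<in>VM N. card (Fib M))"
    by (rule card_SigmaI) (auto simp: finite_VM Fib_def)
  also have "\<dots> = (\<Sum>M\<in>VM N. 2 ^ (card (set_mset M) - 1))"
    by (rule sum.cong) (auto simp: VM_def card_Fib)
  finally show ?thesis .
qed

lemma sum_mod4:
  fixes A :: "'a set" and d :: "'a \<Rightarrow> nat"
  assumes "finite A" "\<forall>x\<in>A. 1 \<le> d x"
  shows "(\<Sum>x\<in>A. 2 ^ (d x - 1)) mod 4 = (card {x\<in>A. d x = 1} + 2 * card {x\<in>A. d x = 2}) mod 4"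
proof -
  let ?A1 = "{x\<in>A. d x = 1}" and ?A2 = "{x\<in>A. d x = 2}" and ?A3 = "{x\<in>A. 3 \<le> d x}"
  have U: "A = ?A1 \<union> (?A2 \<union> ?A3)" using assms(2) by force
  have f: "finite ?A1" "finite ?A2" "finite ?A3" using assms(1) by simp_all
  have s: "(\<Sum>x\<in>A. 2 ^ (d x - 1)) = (\<Sum>x\<in>?A1. 2 ^ (d x - 1)) + ((\<Sum>x\<in>?A2. 2 ^ (d x - 1)) + (\<Sum>x\<in>?A3. 2 ^ (d x - 1)))"
    apply (subst U)
    apply (subst sum.union_disjoint; (use f in auto)?)
    apply (subst sum.union_disjoint; (use f in auto)?)
    done
  have s1: "(\<Sum>x\<in>?A1. 2 ^ (d x - 1)) = card ?A1" by simp
  have s2: "(\<Sum>x\<in>?A2. (2::nat) ^ (d x - 1)) = 2 * card ?A2" by simp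
  have s3: "4 dvd (\<Sum>x\<in>?A3. (2::nat) ^ (d x - 1))"
  proof (rule dvd_sum)
    fix x assume "x \<in> ?A3"
    then have "d x - 1 = 2 + (d x - 3)" by auto
    then have "(2::nat) ^ (d x - 1) = 4 * 2 ^ (d x - 3)" by (simp add: power_add)
    then show "4 dvd (2::nat) ^ (d x - 1)" by simp
  qed
  obtain k where k: "(\<Sum>x\<in>?A3. (2::nat) ^ (d x - 1)) = 4 * k" using s3 by (auto elim: dvdE)
  have g: "\<And>a b k::nat. (a + (2*b + 4*k)) mod 4 = (a + 2*b) mod 4" by presburger
  show ?thesis unfolding s s1 s2 k by (rule g)
qed


lemma mset_single_part: assumes "set_mset M = {a}" shows "M = replicate_mset (count M a) a"
proof (rule multiset_eqI)
  fix x show "count M x = count (replicate_mset (count M a) a) x"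
  proof (cases "x = a")
    case True then show ?thesis by simp
  next
    case False then have "x \<notin># M" using assms by auto
    then show ?thesis using False by (simp add: not_in_iff)
  qed
qed

lemma mset_two_parts: assumes "set_mset M = {a, b}" "a \<noteq> b"
  shows "M = replicate_mset (count M a) a + replicate_mset (count M b) b"
proof (rule multiset_eqI)
  fix x show "count M x = count (replicate_mset (count M a) a + replicate_mset (count M b) b) x"
  proof (cases "x = a")
    case True then show ?thesis using assms(2) by simp
  next
    case False
    show ?thesis
    proof (cases "x = b")
      case True then show ?thesis using False by simp
    next
      case F2: False
      then have "x \<notin># M" using assms False by auto
      then show ?thesis using False F2 by (simp add: not_in_iff)
    qed
  qed
qed

lemma card_V1: assumes "0<N"
  shows "card {M\<in>VM N. card (set_mset M) = 1} = card (Dv 1 N)"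
proof -
  let ?h = "\<lambda>(d::nat,e::nat). replicate_mset e d"
  have "{M\<in>VM N. card (set_mset M) = 1} = ?h ` Dv 1 N"
  proof (rule set_eqI, rule iffI)
    fix M assume M: "M \<in> {M\<in>VM N. card (set_mset M) = 1}"
    then have "card (set_mset M) = 1" by simp
    then obtain a where a: "set_mset M = {a}" by (rule card_1_singletonE)
    have eq: "M = replicate_mset (count M a) a" by (rule mset_single_part[OF a])
    have "sum_mset M = N" using M by (simp add: VM_def)
    then have "count M a * a = N" using eq by (metis sum_mset_replicate_mset of_nat_id)
    then have "(a, count M a) \<in> Dv 1 N" by (simp add: mult.commute)
    then show "M \<in> ?h ` Dv 1 N" using eq by (intro image_eqI[where x="(a, count M a)"]) simp_all
  next
    fix M assume "M \<in> ?h ` Dv 1 N"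
    then obtain d e where de: "d*e = N" "M = replicate_mset e d" by auto
    then have pos: "0<d" "0<e" using assms by (auto intro!: Nat.gr0I)
    have sM: "set_mset M = {d}" using de pos by simp
    have "sum_mset M = N" using de by (simp add: mult.commute)
    moreover have "\<forall>k\<in>#M. 0<k" using sM pos by simp
    moreover have "\<forall>k\<in>#M. odd k \<longrightarrow> k < 2 * Min (set_mset M)" using sM pos by simp
    moreover have "M \<noteq> {#}" using sM by auto
    ultimately show "M \<in> {M\<in>VM N. card (set_mset M) = 1}" using sM by (simp add: VM_def)
  qed
  moreover have "inj_on ?h (Dv 1 N)"
  proof (rule inj_onI)
    fix x y assume x: "x \<in> Dv 1 N" and y: "y \<in> Dv 1 N" and e: "?h x = ?h y"
    obtain d1 e1 where x1: "x = (d1,e1)" by (cases x)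
    obtain d2 e2 where y1: "y = (d2,e2)" by (cases y)
    have "0 < e1" using x x1 assms by (auto intro!: Nat.gr0I)
    have "count (replicate_mset e1 d1) d1 = count (replicate_mset e2 d2) d1" using e x1 y1 by simp
    then have "e1 = (if d1 = d2 then e2 else 0)" by simp
    then have "d1 = d2" "e1 = e2" using \<open>0<e1\<close> by (auto split: if_splits)
    then show "x = y" using x1 y1 by simp
  qed
  ultimately show ?thesis by (simp add: card_image)
qed

lemma card_V2:
  shows "card {M\<in>VM N. card (set_mset M) = 2} = card (Tset N)"
proof -
  let ?h = "\<lambda>(a::nat,b::nat,i::nat,j::nat). replicate_mset i a + replicate_mset j b"
  have "{M\<in>VM N. card (set_mset M) = 2} = ?h ` Tset N"
  proof (rule set_eqI, rule iffI)
    fix M assume M: "M \<in> {M\<in>VM N. card (set_mset M) = 2}"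
    then obtain x y where xy: "set_mset M = {x,y}" "x \<noteq> y" by (auto simp: card_2_iff)
    define a where "a = min x y"
    define b where "b = max x y"
    have ab: "set_mset M = {a,b}" "a < b" using xy by (auto simp: a_def b_def min_def max_def)
    have eq: "M = replicate_mset (count M a) a + replicate_mset (count M b) b"
      by (rule mset_two_parts[OF ab(1)]) (use ab in simp)
    have VM: "(\<forall>k\<in>#M. 0<k)" "sum_mset M = N" "(\<forall>k\<in>#M. odd k \<longrightarrow> k < 2 * Min (set_mset M))"
      using M by (auto simp: VM_def)
    have "Min (set_mset M) = a" using ab by simp
    then have c: "odd b \<longrightarrow> b < 2*a" using VM(3) ab by auto
    have "0 < a" using VM(1) ab by auto
    have "0 < count M a" "0 < count M b" using ab by auto
    have "sum_mset M = count M a * a + count M b * b" by (subst eq) simp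
    then have "a * count M a + b * count M b = N" using VM(2) by (simp add: mult.commute)
    then have "(a, b, count M a, count M b) \<in> Tset N"
      using c \<open>0<a\<close> ab \<open>0 < count M a\<close> \<open>0 < count M b\<close> by (simp add: Tset_def)
    then show "M \<in> ?h ` Tset N" using eq by (intro image_eqI[where x="(a, b, count M a, count M b)"]) simp_all
  next
    fix M assume "M \<in> ?h ` Tset N"
    then obtain a b i j where t: "(a,b,i,j) \<in> Tset N" "M = replicate_mset i a + replicate_mset j b" by auto
    then have h: "0<a" "a<b" "0<i" "0<j" "a*i+b*j = N" "odd b \<longrightarrow> b < 2*a" by (auto simp: Tset_def)
    have sM: "set_mset M = {a,b}" using t h by auto
    have mn: "Min (set_mset M) = a" using sM h by simp
    have "sum_mset M = N" using t h by (simp add: mult.commute)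
    moreover have "\<forall>k\<in>#M. 0<k" using sM h by auto
    moreover have "\<forall>k\<in>#M. odd k \<longrightarrow> k < 2 * Min (set_mset M)" using sM h mn by auto
    moreover have "M \<noteq> {#}" using sM by auto
    moreover have "card (set_mset M) = 2" using sM h by simp
    ultimately show "M \<in> {M\<in>VM N. card (set_mset M) = 2}" by (simp add: VM_def)
  qed
  moreover have "inj_on ?h (Tset N)"
  proof (rule inj_onI)
    fix x y assume x: "x \<in> Tset N" and y: "y \<in> Tset N" and e: "?h x = ?h y"
    obtain a b i j where x1: "x = (a,b,i,j)" using prod_cases4 by blast
    obtain a' b' i' j' where y1: "y = (a',b',i',j')" using prod_cases4 by blast
    have h: "a<b" "0<i" "0<j" "a'<b'" "0<i'" "0<j'" using x y x1 y1 by (auto simp: Tset_def)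
    have e2: "replicate_mset i a + replicate_mset j b = replicate_mset i' a' + replicate_mset j' b'"
      using e x1 y1 by simp
    have "set_mset (replicate_mset i a + replicate_mset j b) = {a,b}" using h by auto
    moreover have "set_mset (replicate_mset i' a' + replicate_mset j' b') = {a',b'}" using h by auto
    ultimately have "{a,b} = {a',b'}" using e2 by simp
    then have ab: "a = a'" "b = b'" using h by (auto simp: doubleton_eq_iff)
    have "count (replicate_mset i a + replicate_mset j b) a = count (replicate_mset i' a' + replicate_mset j' b') a"
      "count (replicate_mset i a + replicate_mset j b) b = count (replicate_mset i' a' + replicate_mset j' b') b"
      using e2 by simp_all
    then have "i = i'" "j = j'" using ab h by auto
    then show "x = y" using x1 y1 ab by simp
  qed
  ultimately show ?thesis by (simp add: card_image)
qed

lemma pbar_mod4: assumes "0<N"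
  shows "pbar_omega N mod 4 = (card (Dv 1 N) + 2 * card (Tset N)) mod 4"
proof -
  have "pbar_omega N mod 4 = (card {M\<in>VM N. card (set_mset M) = 1} + 2 * card {M\<in>VM N. card (set_mset M) = 2}) mod 4"
    unfolding pbar_sum
  proof (rule sum_mod4)
    show "finite (VM N)" by (rule finite_VM)
    show "\<forall>x\<in>VM N. 1 \<le> card (set_mset x)"
    proof
      fix M assume "M \<in> VM N"
      then have "M \<noteq> {#}" by (simp add: VM_def)
      then have "set_mset M \<noteq> {}" by simp
      then show "1 \<le> card (set_mset M)" by (simp add: Suc_leI card_gt_0_iff)
    qed
  qed
  then show ?thesis using card_V1[OF assms] card_V2 by simp
qed


definition SE :: "nat \<Rightarrow> (nat\<times>nat) set" where
  "SE N = {(m, n). m \<le> N \<and> n \<le> N \<and> 2 * (m^2 + n^2) = N}"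
definition SO :: "nat \<Rightarrow> (nat\<times>nat) set" where
  "SO N = {(m, n). m \<le> N \<and> n \<le> N \<and> 1 + 2 * m * (m + 1) + 2 * n * (n + 1) = N}"

lemma rhs_unfold: "rhs_coeff N = (if N = 0 then -1 else 0) + (\<Sum>(m, n) \<in> SE N. (-1::int) ^ (m + n)) + int (card (SO N))"
  unfolding rhs_coeff_def SE_def SO_def by simp

lemma finite_SE: "finite (SE N)"
  by (rule finite_subset[of _ "{0..N}\<times>{0..N}"]) (auto simp: SE_def)
lemma finite_SO: "finite (SO N)"
  by (rule finite_subset[of _ "{0..N}\<times>{0..N}"]) (auto simp: SO_def)

lemma SE_odd: "odd N \<Longrightarrow> SE N = {}"
  by (auto simp: SE_def)
lemma SO_even: "even N \<Longrightarrow> SO N = {}"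
  by (auto simp: SO_def)

lemma le_square: "(m::nat) \<le> m^2"
  by (cases m) (auto simp: power2_eq_square)

lemma le_pron: "(m::nat) \<le> m*(m+1)"
  by simp

lemma card_swap: assumes "finite A" "\<And>m n. (m,n) \<in> A \<longleftrightarrow> (n,m) \<in> A"
  shows "card {(m,n)\<in>A. n < m} = card {(m,n)\<in>A. m < n}"
proof -
  have "{(m,n)\<in>A. n < m} = (\<lambda>(m,n). (n,m)) ` {(m,n)\<in>A. m < n}"
    using assms(2) by (auto simp: image_iff)
  moreover have "inj_on (\<lambda>(m::'a,n::'a). (n,m)) {(m,n)\<in>A. m < n}" by (auto simp: inj_on_def)
  ultimately show ?thesis by (simp add: card_image)
qed

lemma split3_card: assumes "finite (A :: ('a::linorder \<times> 'a) set)"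
  shows "card A = card {(m,n)\<in>A. m < n} + card {(m,n)\<in>A. n < m} + card {(m,n)\<in>A. m = n}"
proof -
  let ?A = "{(m,n)\<in>A. m < n}" and ?B = "{(m,n)\<in>A. n < m}" and ?C = "{(m,n)\<in>A. m = n}"
  have U: "A = ?A \<union> ?B \<union> ?C" by auto
  have f: "finite ?A" "finite ?B" "finite ?C" using assms by (auto intro: finite_subset)
  have d1: "?A \<inter> ?B = {}" by auto
  have d2: "(?A \<union> ?B) \<inter> ?C = {}" by auto
  have "card (?A \<union> ?B \<union> ?C) = card (?A \<union> ?B) + card ?C" using card_Un_disjoint[OF _ f(3) d2] f by blast
  also have "card (?A \<union> ?B) = card ?A + card ?B" using card_Un_disjoint[OF f(1) f(2) d1] .
  finally show ?thesis using U by simp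
qed

lemma even_div2_inj: "even (a::nat) \<Longrightarrow> even b \<Longrightarrow> a div 2 = b div 2 \<Longrightarrow> a = b"
  by (metis dvd_mult_div_cancel)

lemma SOlt_S0: assumes "odd N"
  shows "card {(m,n)\<in>SO N. m < n} = card (S0 N)"
proof -
  let ?A = "{(m,n)\<in>SO N. m < n}"
  let ?f = "\<lambda>(m::nat,n::nat). (n - m, n + m + 1)"
  let ?g = "\<lambda>(p::nat,q::nat). ((q - p - 1) div 2, (q + p - 1) div 2)"
  show ?thesis
  proof (rule card_bij_eq[of ?f _ _ ?g])
    show "inj_on ?f ?A"
    proof (rule inj_onI)
      fix x y assume x: "x \<in> ?A" and y: "y \<in> ?A" and e: "?f x = ?f y"
      obtain m n where x1: "x = (m,n)" by (cases x)
      obtain m' n' where y1: "y = (m',n')" by (cases y)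
      have h: "m < n" "m' < n'" using x y x1 y1 by auto
      have "n - m = n' - m'" "n + m + 1 = n' + m' + 1" using e x1 y1 by auto
      then have "m = m'" "n = n'" using h by arith+
      then show "x = y" using x1 y1 by simp
    qed
    show "?f ` ?A \<subseteq> S0 N"
    proof
      fix y assume "y \<in> ?f ` ?A"
      then obtain m n where mn: "(m,n) \<in> SO N" "m < n" "y = ?f (m,n)" by auto
      then have e: "1 + 2*m*(m+1) + 2*n*(n+1) = N" by (simp add: SO_def)
      obtain k where k: "n = m + k" "0<k" using mn(2) less_imp_add_positive by blast
      have "k*k + (m+k+m+1)*(m+k+m+1) = N" using e k by (simp add: algebra_simps)
      then show "y \<in> S0 N" using mn(3) k by (simp add: S0_def)
    qed
    show "inj_on ?g (S0 N)"
    proof (rule inj_onI)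
      fix x y assume x: "x \<in> S0 N" and y: "y \<in> S0 N" and e: "?g x = ?g y"
      obtain p q where x1: "x = (p,q)" by (cases x)
      obtain p' q' where y1: "y = (p',q')" by (cases y)
      have h: "p<q" "p*p+q*q = N" "p'<q'" "p'*p'+q'*q' = N" "0<p" "0<p'" using x y x1 y1 by (auto simp: S0_def)
      have "odd (p+q)" using h(2) assms by auto
      moreover have "odd (p'+q')" using h(4) assms by auto
      ultimately have ev: "even (q - p - 1)" "even (q' - p' - 1)" "even (q + p - 1)" "even (q' + p' - 1)"
        using h by presburger+
      have "(q - p - 1) div 2 = (q' - p' - 1) div 2" "(q + p - 1) div 2 = (q' + p' - 1) div 2"
        using e x1 y1 by simp_all
      then have "q - p - 1 = q' - p' - 1" "q + p - 1 = q' + p' - 1"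
        using ev even_div2_inj by blast+
      then have "p = p'" "q = q'" using h by arith+
      then show "x = y" using x1 y1 by simp
    qed
    show "?g ` S0 N \<subseteq> ?A"
    proof
      fix y assume "y \<in> ?g ` S0 N"
      then obtain p q where pq: "(p,q) \<in> S0 N" "y = ?g (p,q)" by auto
      then have h: "0<p" "p<q" "p*p+q*q = N" by (auto simp: S0_def)
      have "odd (p+q)" using h(3) assms by auto
      obtain d where d: "q = p + d" "0 < d" using h(2) less_imp_add_positive by blast
      have "odd d" using \<open>odd (p+q)\<close> d(1) by presburger
      then obtain k where "d = 2*k + 1" by (rule oddE)
      then have k: "q = p + 2*k + 1" using d(1) by simp
      have y: "y = (k, p + k)" using pq(2) k by simp
      have "1 + 2*k*(k+1) + 2*(p+k)*(p+k+1) = N" using h(3) k by (simp add: algebra_simps)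
      moreover have "k \<le> N" "p + k \<le> N"
      proof -
        have "q*1 \<le> q*q" using h by (intro mult_le_mono) auto
        then have "q \<le> N" using h(3) by linarith
        then show "k \<le> N" "p + k \<le> N" using k by linarith+
      qed
      ultimately show "y \<in> ?A" using y h by (simp add: SO_def)
    qed
    show "finite ?A" by (rule finite_subset[OF _ finite_SO]) auto
    show "finite (S0 N)" by (rule finite_S0)
  qed
qed

lemma SOeq: assumes "odd N"
  shows "card {(m,n)\<in>SO N. m = n} = sqc 1 N"
proof -
  let ?A = "{(m,n)\<in>SO N. m = n}" and ?B = "{(d,e). d = e \<and> 1*d*e = N}"
  let ?f = "\<lambda>(m::nat,n::nat). (2*m+1, 2*n+1)"
  let ?g = "\<lambda>(d::nat,e::nat). (d div 2, e div 2)"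
  have "0 < N" using assms by (cases N) auto
  have finB: "finite ?B" by (rule finite_subset[OF _ finite_Dv[OF \<open>0<N\<close>, of 1]]) auto
  have "card ?A = card ?B"
  proof (rule card_bij_eq[of ?f _ _ ?g])
    show "inj_on ?f ?A" by (auto simp: inj_on_def)
    show "?f ` ?A \<subseteq> ?B"
    proof
      fix y assume "y \<in> ?f ` ?A"
      then obtain m where m: "(m,m) \<in> SO N" "y = (2*m+1, 2*m+1)" by auto
      then have "1 + 2*m*(m+1) + 2*m*(m+1) = N" by (simp add: SO_def)
      then have "(2*m+1)*(2*m+1) = N" by (simp add: algebra_simps)
      then show "y \<in> ?B" using m by simp
    qed
    show "inj_on ?g ?B"
    proof (rule inj_onI)
      fix x y assume x: "x \<in> ?B" and y: "y \<in> ?B" and e: "?g x = ?g y"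
      obtain d e1 where x1: "x = (d,e1)" by (cases x)
      obtain d' e2 where y1: "y = (d',e2)" by (cases y)
      have h: "d = e1" "d*d = N" "d' = e2" "d'*d' = N" using x y x1 y1 by auto
      then have "d = d'" using sq_unique[of 1 d d'] by simp
      then show "x = y" using x1 y1 h by simp
    qed
    show "?g ` ?B \<subseteq> ?A"
    proof
      fix y assume "y \<in> ?g ` ?B"
      then obtain d where d: "d*d = N" "y = (d div 2, d div 2)" by auto
      then have "odd d" using assms by auto
      then obtain k where k: "d = 2*k+1" by (rule oddE)
      then have y: "y = (k,k)" using d by simp
      have "1 + 2*k*(k+1) + 2*k*(k+1) = N" using d(1) k by (simp add: algebra_simps)
      moreover have "k \<le> N"
      proof -
        have "d*1 \<le> d*d" using k by (intro mult_le_mono) auto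
        then show ?thesis using d(1) k by linarith
      qed
      ultimately show "y \<in> ?A" using y by (simp add: SO_def)
    qed
    show "finite ?A" by (rule finite_subset[OF _ finite_SO]) auto
    show "finite ?B" by (rule finB)
  qed
  also have "\<dots> = sqc 1 N" using card_diag[of 1 N] by simp
  finally show ?thesis .
qed

lemma card_SO: assumes "odd N" shows "card (SO N) = 2 * card (S0 N) + sqc 1 N"
proof -
  have "card (SO N) = card {(m,n)\<in>SO N. m < n} + card {(m,n)\<in>SO N. n < m} + card {(m,n)\<in>SO N. m = n}"
    by (rule split3_card[OF finite_SO])
  moreover have "card {(m,n)\<in>SO N. n < m} = card {(m,n)\<in>SO N. m < n}"
    by (rule card_swap[OF finite_SO]) (auto simp: SO_def)
  ultimately show ?thesis using SOlt_S0[OF assms] SOeq[OF assms] by simp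
qed

lemma sum_sign_mod2: assumes "finite A"
  shows "(\<Sum>x\<in>A. (-1::int) ^ (f x)) mod 2 = int (card A) mod 2"
proof -
  have ev: "\<forall>x\<in>A. (2::int) dvd ((-1) ^ (f x) - 1)"
  proof
    fix x show "(2::int) dvd ((-1) ^ (f x) - 1)" by (cases "even (f x)") simp_all
  qed
  have "(2::int) dvd (\<Sum>x\<in>A. ((-1) ^ (f x) - 1))" by (rule dvd_sum) (use ev in blast)
  moreover have "(\<Sum>x\<in>A. ((-1::int) ^ (f x) - 1)) = (\<Sum>x\<in>A. (-1::int) ^ (f x)) - int (card A)"
    by (simp add: sum_subtractf)
  ultimately have "(2::int) dvd ((\<Sum>x\<in>A. (-1::int) ^ (f x)) - int (card A))" by simp
  then show ?thesis by (simp add: mod_eq_dvd_iff)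
qed

lemma SElt0: assumes "0<N"
  shows "card {(m,n)\<in>SE N. m < n \<and> m = 0} = sqc 2 N"
proof -
  let ?A = "{(m,n)\<in>SE N. m < n \<and> m = 0}" and ?B = "{(d,e). d = e \<and> 2*d*e = N}"
  have "?A = (\<lambda>(d::nat,e::nat). (0::nat, e)) ` ?B"
  proof (rule set_eqI, rule iffI)
    fix x assume x: "x \<in> ?A"
    obtain m n where x1: "x = (m,n)" by (cases x)
    then have h: "m = 0" "2*(n^2) = N" using x by (auto simp: SE_def)
    then have "(n,n) \<in> ?B" by (simp add: power2_eq_square mult.assoc)
    moreover have "x = (\<lambda>(d::nat,e::nat). (0::nat, e)) (n,n)" using x1 h by simp
    ultimately show "x \<in> (\<lambda>(d::nat,e::nat). (0::nat, e)) ` ?B" by blast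
  next
    fix x assume "x \<in> (\<lambda>(d::nat,e::nat). (0::nat, e)) ` ?B"
    then obtain n where n: "2*n*n = N" "x = (0,n)" by auto
    then have "0 < n" using assms by (cases n) auto
    moreover have "n \<le> N"
    proof -
      have "n*1 \<le> n*n" using \<open>0<n\<close> by (intro mult_le_mono) auto
      then show ?thesis using n(1) by linarith
    qed
    ultimately show "x \<in> ?A" using n by (simp add: SE_def power2_eq_square mult.assoc)
  qed
  moreover have "inj_on (\<lambda>(d::nat,e::nat). (0::nat, e)) ?B" by (auto simp: inj_on_def)
  ultimately have "card ?A = card ?B" by (simp add: card_image)
  then show ?thesis using card_diag[of 2 N] by simp
qed

lemma SElt1: assumes "even N"
  shows "card {(m,n)\<in>SE N. m < n \<and> m \<noteq> 0} = card (S0 N)"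
proof -
  let ?A = "{(m,n)\<in>SE N. m < n \<and> m \<noteq> 0}"
  let ?f = "\<lambda>(m::nat,n::nat). (n - m, n + m)"
  let ?g = "\<lambda>(p::nat,q::nat). ((q - p) div 2, (q + p) div 2)"
  show ?thesis
  proof (rule card_bij_eq[of ?f _ _ ?g])
    show "inj_on ?f ?A"
    proof (rule inj_onI)
      fix x y assume x: "x \<in> ?A" and y: "y \<in> ?A" and e: "?f x = ?f y"
      obtain m n where x1: "x = (m,n)" by (cases x)
      obtain m' n' where y1: "y = (m',n')" by (cases y)
      have h: "m < n" "m' < n'" using x y x1 y1 by auto
      have "n - m = n' - m'" "n + m = n' + m'" using e x1 y1 by auto
      then have "m = m'" "n = n'" using h by arith+
      then show "x = y" using x1 y1 by simp
    qed
    show "?f ` ?A \<subseteq> S0 N"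
    proof
      fix y assume "y \<in> ?f ` ?A"
      then obtain m n where mn: "(m,n) \<in> SE N" "m < n" "m \<noteq> 0" "y = ?f (m,n)" by auto
      then have e: "2*(m^2+n^2) = N" by (simp add: SE_def)
      obtain k where k: "n = m + k" "0<k" using mn(2) less_imp_add_positive by blast
      have "k*k + (m+k+m)*(m+k+m) = N" using e k by (simp add: algebra_simps power2_eq_square)
      then show "y \<in> S0 N" using mn k by (simp add: S0_def)
    qed
    show "inj_on ?g (S0 N)"
    proof (rule inj_onI)
      fix x y assume x: "x \<in> S0 N" and y: "y \<in> S0 N" and e: "?g x = ?g y"
      obtain p q where x1: "x = (p,q)" by (cases x)
      obtain p' q' where y1: "y = (p',q')" by (cases y)
      have h: "p<q" "p*p+q*q = N" "p'<q'" "p'*p'+q'*q' = N" "0<p" "0<p'" using x y x1 y1 by (auto simp: S0_def)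
      have "even (p+q)" using h(2) assms by auto
      moreover have "even (p'+q')" using h(4) assms by auto
      ultimately have ev: "even (q - p)" "even (q' - p')" "even (q + p)" "even (q' + p')"
        using h by presburger+
      have "(q - p) div 2 = (q' - p') div 2" "(q + p) div 2 = (q' + p') div 2"
        using e x1 y1 by simp_all
      then have "q - p = q' - p'" "q + p = q' + p'"
        using ev even_div2_inj by blast+
      then have "p = p'" "q = q'" using h by arith+
      then show "x = y" using x1 y1 by simp
    qed
    show "?g ` S0 N \<subseteq> ?A"
    proof
      fix y assume "y \<in> ?g ` S0 N"
      then obtain p q where pq: "(p,q) \<in> S0 N" "y = ?g (p,q)" by auto
      then have h: "0<p" "p<q" "p*p+q*q = N" by (auto simp: S0_def)
      have "even (p+q)" using h(3) assms by auto
      obtain d where d: "q = p + d" "0 < d" using h(2) less_imp_add_positive by blast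
      have "even d" using \<open>even (p+q)\<close> d(1) by presburger
      then obtain k where "d = 2*k" by (rule evenE)
      then have k: "q = p + 2*k" "0 < k" using d by auto
      have y: "y = (k, p + k)" using pq(2) k by simp
      have "2*(k^2 + (p+k)^2) = N" using h(3) k by (simp add: algebra_simps power2_eq_square)
      moreover have "k \<le> N" "p + k \<le> N"
      proof -
        have "q*1 \<le> q*q" using h by (intro mult_le_mono) auto
        then have "q \<le> N" using h(3) by linarith
        then show "k \<le> N" "p + k \<le> N" using k by linarith+
      qed
      ultimately show "y \<in> ?A" using y h k by (simp add: SE_def)
    qed
    show "finite ?A" by (rule finite_subset[OF _ finite_SE]) auto
    show "finite (S0 N)" by (rule finite_S0)
  qed
qed

lemma SEeq: "card {(m,n)\<in>SE N. m = n} = sqc 4 N"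
proof -
  have "{(m,n)\<in>SE N. m = n} = {(d,e). d = e \<and> 4*d*e = N}"
  proof (rule set_eqI, rule iffI)
    fix x assume "x \<in> {(m,n)\<in>SE N. m = n}"
    then show "x \<in> {(d,e). d = e \<and> 4*d*e = N}" by (auto simp: SE_def power2_eq_square)
  next
    fix x assume x: "x \<in> {(d,e). d = e \<and> 4*d*e = N}"
    obtain d e where x1: "x = (d,e)" by (cases x)
    then have h: "d = e" "4*d*d = N" using x by auto
    have "d \<le> N"
    proof (cases "d = 0")
      case False
      then have "1*1*d \<le> 4*d*d" by (intro mult_le_mono) auto
      then show ?thesis using h by linarith
    qed simp
    then show "x \<in> {(m,n)\<in>SE N. m = n}" using x1 h by (simp add: SE_def power2_eq_square)
  qed
  then show ?thesis using card_diag[of 4 N] by simp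
qed

lemma sum_SE: assumes "0<N" "even N"
  shows "(\<Sum>(m, n) \<in> SE N. (-1::int) ^ (m + n)) mod 4 = int (2 * card (S0 N) + 2 * sqc 2 N + sqc 4 N) mod 4"
proof -
  let ?F = "\<lambda>(m::nat, n::nat). (-1::int) ^ (m + n)"
  let ?L = "{(m,n)\<in>SE N. m < n}" and ?G = "{(m,n)\<in>SE N. n < m}" and ?E = "{(m,n)\<in>SE N. m = n}"
  have U: "SE N = ?L \<union> ?G \<union> ?E" by auto
  have f: "finite ?L" "finite ?G" "finite ?E" using finite_SE by (auto intro: finite_subset)
  have s: "sum ?F (SE N) = sum ?F ?L + sum ?F ?G + sum ?F ?E"
  proof -
    have d1: "?L \<inter> ?G = {}" by auto
    have d2: "(?L \<union> ?G) \<inter> ?E = {}" by auto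
    have "sum ?F (?L \<union> ?G \<union> ?E) = sum ?F (?L \<union> ?G) + sum ?F ?E"
      by (rule sum.union_disjoint) (use f d2 in auto)
    also have "sum ?F (?L \<union> ?G) = sum ?F ?L + sum ?F ?G"
      by (rule sum.union_disjoint) (use f d1 in auto)
    finally show ?thesis using U by simp
  qed
  have sG: "sum ?F ?G = sum ?F ?L"
  proof -
    have "?G = (\<lambda>(m,n). (n,m)) ` ?L" by (auto simp: SE_def image_iff add.commute)
    moreover have "inj_on (\<lambda>(m::nat,n::nat). (n,m)) ?L" by (auto simp: inj_on_def)
    ultimately have "sum ?F ?G = sum (?F \<circ> (\<lambda>(m,n). (n,m))) ?L" by (simp add: sum.reindex)
    also have "\<dots> = sum ?F ?L" by (rule sum.cong) (auto simp: add.commute)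
    finally show ?thesis .
  qed
  have sE: "sum ?F ?E = int (sqc 4 N)"
  proof -
    have "sum ?F ?E = sum (\<lambda>x. 1) ?E" by (rule sum.cong) auto
    then show ?thesis using SEeq by simp
  qed
  have cL: "card ?L = card (S0 N) + sqc 2 N"
  proof -
    have "card ?L = card {x\<in>?L. case x of (m,n) \<Rightarrow> m = 0} + card {x\<in>?L. \<not> (case x of (m,n) \<Rightarrow> m = 0)}"
      by (rule card_filter_split[OF f(1)])
    moreover have "{x\<in>?L. case x of (m,n) \<Rightarrow> m = 0} = {(m,n)\<in>SE N. m < n \<and> m = 0}" by auto
    moreover have "{x\<in>?L. \<not> (case x of (m,n) \<Rightarrow> m = 0)} = {(m,n)\<in>SE N. m < n \<and> m \<noteq> 0}" by auto
    ultimately show ?thesis using SElt0[OF assms(1)] SElt1[OF assms(2)] by simp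
  qed
  have mL: "sum ?F ?L mod 2 = int (card ?L) mod 2"
    using sum_sign_mod2[OF f(1), of "\<lambda>(m,n). m + n"] by (simp add: case_prod_beta)
  have g: "\<And>a c e :: int. a mod 2 = c mod 2 \<Longrightarrow> (a + a + e) mod 4 = (2*c + e) mod 4" by presburger
  have "sum ?F (SE N) mod 4 = (2 * int (card ?L) + int (sqc 4 N)) mod 4"
    unfolding s sG sE by (rule g[OF mL])
  then show ?thesis using cL by simp
qed


lemma sqc14: assumes "even N" shows "sqc 1 N = sqc 4 N"
proof -
  have "(\<exists>t. 1*t*t = N) \<longleftrightarrow> (\<exists>u. 4*u*u = N)"
  proof
    assume "\<exists>t. 1*t*t = N"
    then obtain t where t: "t*t = N" by auto
    then have "even t" using assms by auto
    then obtain u where "t = 2*u" by (rule evenE)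
    then have "4*u*u = N" using t by simp
    then show "\<exists>u. 4*u*u = N" by blast
  next
    assume "\<exists>u. 4*u*u = N"
    then obtain u where u: "4*u*u = N" by auto
    then have "1*(2*u)*(2*u) = N" by simp
    then show "\<exists>t. 1*t*t = N" by blast
  qed
  then show ?thesis by (simp add: sqc_def)
qed

lemma sqc2_odd: "odd N \<Longrightarrow> sqc 2 N = 0"
  by (auto simp: sqc_def)

lemma Dre_odd: assumes "odd N" shows "Dre N = 0"
proof -
  have "QP N (\<lambda>p q r s. p = q \<and> even s \<and> \<not> odd r) = {}"
  proof (rule set_eqI)
    fix x :: q4
    obtain p q r s where x: "x = (p,q,r,s)" using prod_cases4 by blast
    have "\<not> (p*r + q*s = N \<and> even s \<and> even r)" using assms by auto
    then show "x \<in> QP N (\<lambda>p q r s. p = q \<and> even s \<and> \<not> odd r) \<longleftrightarrow> x \<in> {}" unfolding x by auto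
  qed
  then show ?thesis by (simp add: Dre_def)
qed

lemma mix_re: assumes "0<N" shows "(card (Dmix N) + Dre N) mod 2 = sqc 2 N"
proof (cases "even N")
  case True
  have a: "(card (Dmix N) + sqc 1 N + sqc 2 N) mod 2 = 0" by (rule card_Dmix_mod2[OF assms True])
  have b: "Dre N mod 2 = sqc 1 N" using card_Dse_re_mod2[OF assms] sqc14[OF True] by (simp add: Dre_def)
  have c: "sqc 2 N \<le> 1" by (simp add: sqc_def)
  have g: "\<And>m d s1 s2::nat. (m + s1 + s2) mod 2 = 0 \<Longrightarrow> d mod 2 = s1 \<Longrightarrow> s2 \<le> 1 \<Longrightarrow> (m + d) mod 2 = s2"
    by presburger
  show ?thesis by (rule g[OF a b c])
next
  case False
  then show ?thesis using Dmix_odd Dre_odd sqc2_odd by simp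
qed

lemma rhs_mod4: assumes "0<N"
  shows "rhs_coeff N mod 4 = int (sqc 1 N + 2 * card (S0 N) + 2 * sqc 2 N) mod 4"
proof (cases "even N")
  case True
  have "rhs_coeff N = (\<Sum>(m, n) \<in> SE N. (-1::int) ^ (m + n))"
    using assms True by (simp add: rhs_unfold SO_even)
  then show ?thesis using sum_SE[OF assms True] sqc14[OF True] by (simp add: ac_simps)
next
  case False
  have "rhs_coeff N = int (card (SO N))"
    using assms False by (simp add: rhs_unfold SE_odd)
  then show ?thesis using card_SO[OF False] sqc2_odd[OF False] by (simp add: ac_simps)
qed

lemma VM0: "VM 0 = {}"
proof (rule ccontr)
  assume "VM 0 \<noteq> {}"
  then obtain M where M: "M \<in> VM 0" by auto
  then have "M \<noteq> {#}" "\<forall>k\<in>#M. 0<k" "sum_mset M = 0" by (auto simp: VM_def)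
  then obtain k where "k \<in># M" by auto
  then have "k \<le> 0" "0 < k" using mem_le_sum_mset[of k M] \<open>sum_mset M = 0\<close> \<open>\<forall>k\<in>#M. 0<k\<close> by auto
  then show False by simp
qed

lemma main_nat: assumes "0<N"
  shows "pbar_omega N mod 4 = (sqc 1 N + 2 * card (S0 N) + 2 * sqc 2 N) mod 4"
proof -
  have p: "pbar_omega N mod 4 = (card (Dv 1 N) + 2 * card (Tset N)) mod 4" by (rule pbar_mod4[OF assms])
  have t: "card (Dv 1 N) = 2 * (card (Dsame N) + card (Dmix N)) + sqc 1 N"
    using card_Dv1[OF assms] card_Dl_split[OF assms] by simp
  have T: "card (Tset N) mod 2 = (card (S0 N) + card (Dsame N) + Dre N) mod 2" by (rule T_mod2[OF assms])
  have m: "(card (Dmix N) + Dre N) mod 2 = sqc 2 N" by (rule mix_re[OF assms])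
  have conv: "\<And>a b::nat. a mod 2 = b mod 2 \<longleftrightarrow> (even a \<longleftrightarrow> even b)" by presburger
  have g2: "\<And>T Ds Dm S Dr s2::nat. T mod 2 = (S + Ds + Dr) mod 2 \<Longrightarrow> (Dm + Dr) mod 2 = s2 \<Longrightarrow>
     (T + Ds + Dm) mod 2 = (S + s2) mod 2"
  proof -
    fix T Ds Dm S Dr s2 :: nat
    assume a1: "T mod 2 = (S + Ds + Dr) mod 2" and a2: "(Dm + Dr) mod 2 = s2"
    have b1: "even T \<longleftrightarrow> even (S + Ds + Dr)" using a1 conv by blast
    have "(Dm + Dr) mod 2 = s2 mod 2" using a2 by simp
    then have b2: "even (Dm + Dr) \<longleftrightarrow> even s2" using conv by blast
    have "even (T + Ds + Dm) \<longleftrightarrow> even (S + s2)" using b1 b2 unfolding even_add by argo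
    then show "(T + Ds + Dm) mod 2 = (S + s2) mod 2" using conv by blast
  qed
  have g3: "\<And>a b c::nat. a mod 2 = b mod 2 \<Longrightarrow> (c + 2*a) mod 4 = (c + 2*b) mod 4"
    by presburger
  have "pbar_omega N mod 4 = (sqc 1 N + 2*(card (Tset N) + card (Dsame N) + card (Dmix N))) mod 4"
    using p t by (simp add: algebra_simps)
  also have "\<dots> = (sqc 1 N + 2*(card (S0 N) + sqc 2 N)) mod 4"
    by (rule g3[OF g2[OF T m]])
  finally show ?thesis by (simp add: algebra_simps)
qed

theorem theorem4p4:
  fixes N :: nat
  shows "int (pbar_omega N) mod 4 = rhs_coeff N mod 4"
proof (cases "N = 0")
  case True
  have "pbar_omega 0 = 0" by (simp add: pbar_sum VM0)
  moreover have "SE 0 = {(0,0)}" by (auto simp: SE_def)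
  moreover have "SO 0 = {}" by (auto simp: SO_def)
  ultimately show ?thesis using True by (simp add: rhs_unfold)
next
  case False
  then have "0<N" by simp
  have "int (pbar_omega N) mod 4 = int (pbar_omega N mod 4)" by (simp add: zmod_int)
  also have "\<dots> = int ((sqc 1 N + 2 * card (S0 N) + 2 * sqc 2 N) mod 4)" using main_nat[OF \<open>0<N\<close>] by simp
  also have "\<dots> = int (sqc 1 N + 2 * card (S0 N) + 2 * sqc 2 N) mod 4" by (simp add: zmod_int)
  also have "\<dots> = rhs_coeff N mod 4" using rhs_mod4[OF \<open>0<N\<close>] by simp
  finally show ?thesis .
qed


end
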